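(* Given integers $1 \le k' < k$ and reals $\beta, \xi > 0$, there exist $C, T > 0$ such that the following holds for all sufficiently large $n$ and all $m \ge C n^{1 - 1/(k-1)}$: for all but at most $\beta^m \binom{n}{m}$ of the $m$-element sets $S \subseteq [n]$, there exists $X \subset S$ with $|X| \le \xi m$ such that $$\frac{1}{n} \sum_{x \in [n]} \mathrm{AP}_{k',k}(x, S \setminus X, [n])^2 \le T \mu_e^2,$$ where $\mu_e = n (m/n)^{k'}$.
   Context: $[n] = \{1, \ldots, n\}$. A $k$-term arithmetic progression (AP) is a set of the form $\{a, a+d, \ldots, a+(k-1)d\}$ of integers with $d \ge 1$. For $x \in [n]$, sets $S \subseteq D \subseteq [n]$ and integers $0 \le k' \le k$, $\mathrm{AP}_{k',k}(x, S, D)$ denotes the number of $k$-term APs contained in $D$ which contain $x$ and contain at least $k'$ elements of $S \setminus \{x\}$. *)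

theory Defs
  imports "HOL-Analysis.Analysis"
begin

definition intv :: "nat \<Rightarrow> int set" where
  "intv n = {1..int n}"

definition is_AP :: "nat \<Rightarrow> int set \<Rightarrow> bool" where
  "is_AP k P \<longleftrightarrow> (\<exists>a d. d \<ge> 1 \<and> P = {a + int i * d | i. i < k})"

definition AP_count :: "nat \<Rightarrow> nat \<Rightarrow> int \<Rightarrow> int set \<Rightarrow> int set \<Rightarrow> nat" where
  "AP_count k' k x S D =
     card {P. is_AP k P \<and> P \<subseteq> D \<and> x \<in> P \<and> card (P \<inter> (S - {x})) \<ge> k'}"

end

theory Submission
  imports Defs
begin


lemma choose_ratio:
  fixes n m u :: nat
  assumes "u \<le> m" "m \<le> n"
  shows "real ((n - u) choose (m - u)) \<le> real (n choose m) * (real m / real n) ^ u"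
  using assms(1)
proof (induction u)
  case 0 then show ?case by simp
next
  case (Suc u)
  have um: "u < m" using Suc by simp
  have key: "real (m - u) * real ((n - u) choose (m - u)) = real (n - u) * real ((n - Suc u) choose (m - Suc u))"
  proof -
    have "(m - u) * ((n - u) choose (m - u)) = (n - u) * ((n - u - 1) choose (m - u - 1))"
      using times_binomial_minus1_eq[of "m - u" "n - u"] um by simp
    moreover have "n - u - 1 = n - Suc u" "m - u - 1 = m - Suc u" by auto
    ultimately have "(m - u) * ((n - u) choose (m - u)) = (n - u) * ((n - Suc u) choose (m - Suc u))" by simp
    then show ?thesis by (simp only: of_nat_mult[symmetric])
  qed
  have nu: "real (n - u) > 0" using um assms(2) by simp
  have "real ((n - Suc u) choose (m - Suc u)) = real (m - u) / real (n - u) * real ((n - u) choose (m - u))"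
    using key nu by (simp add: field_simps)
  also have "\<dots> \<le> real m / real n * real ((n - u) choose (m - u))"
  proof (rule mult_right_mono)
    have "real (m - u) * real n \<le> real m * real (n - u)"
      using um assms(2) by (simp add: of_nat_diff algebra_simps mult_right_mono)
    moreover have "real n > 0" using um assms(2) by simp
    ultimately show "real (m - u) / real (n - u) \<le> real m / real n"
      using nu by (simp add: divide_simps)
  qed simp
  also have "\<dots> \<le> real m / real n * (real (n choose m) * (real m / real n) ^ u)"
    using Suc by (intro mult_left_mono) auto
  finally show ?case by (simp add: algebra_simps)
qed

lemma count_supersets:
  fixes V U :: "'a set"
  assumes "finite V" "U \<subseteq> V" "m \<le> card V"
  shows "real (card {S. S \<subseteq> V \<and> card S = m \<and> U \<subseteq> S}) \<le> real (card V choose m) * (real m / real (card V)) ^ card U"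
proof (cases "card U \<le> m")
  case False
  then have "{S. S \<subseteq> V \<and> card S = m \<and> U \<subseteq> S} = {}"
    using assms by (auto dest: card_mono[OF finite_subset])
  then have "card {S. S \<subseteq> V \<and> card S = m \<and> U \<subseteq> S} = 0" by (simp only: card.empty)
  then show ?thesis by (simp only: of_nat_0) simp
next
  case True
  have fU: "finite U" using assms finite_subset by blast
  have "card {S. S \<subseteq> V \<and> card S = m \<and> U \<subseteq> S} \<le> card {T. T \<subseteq> V - U \<and> card T = m - card U}"
  proof (rule card_inj_on_le[where f = "\<lambda>S. S - U"])
    show "inj_on (\<lambda>S. S - U) {S. S \<subseteq> V \<and> card S = m \<and> U \<subseteq> S}"
      by (rule inj_onI) blast
    show "(\<lambda>S. S - U) ` {S. S \<subseteq> V \<and> card S = m \<and> U \<subseteq> S} \<subseteq> {T. T \<subseteq> V - U \<and> card T = m - card U}"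
      using fU assms(1) by (auto simp: card_Diff_subset finite_subset)
    show "finite {T. T \<subseteq> V - U \<and> card T = m - card U}"
      using assms(1) by simp
  qed
  also have "\<dots> = (card V - card U) choose (m - card U)"
    using assms fU by (simp add: n_subsets card_Diff_subset)
  finally have "real (card {S. S \<subseteq> V \<and> card S = m \<and> U \<subseteq> S}) \<le> real ((card V - card U) choose (m - card U))"
    by (simp only: of_nat_le_iff)
  then show ?thesis
    using choose_ratio[OF True assms(3)] by linarith
qed



fun dchain :: "'b set \<Rightarrow> ('b \<Rightarrow> 'a set) \<Rightarrow> 'b list \<Rightarrow> bool" where
  "dchain I e [] = True"
| "dchain I e (i # l) = (i \<in> I \<and> e i \<inter> \<Union>(e ` set l) = {} \<and> dchain I e l)"

lemma dchain_set: "dchain I e l \<Longrightarrow> set l \<subseteq> I"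
  by (induction l) auto

lemma dchain_card:
  assumes "\<forall>i\<in>I. finite (e i)"
  shows "dchain I e l \<Longrightarrow> card (\<Union>(e ` set l)) = sum_list (map (\<lambda>i. card (e i)) l)"
proof (induction l)
  case Nil then show ?case by simp
next
  case (Cons i l)
  have fin: "finite (\<Union>(e ` set l))" using Cons.prems dchain_set[of I e l] assms by auto
  have "card (\<Union>(e ` set (i # l))) = card (e i \<union> \<Union>(e ` set l))" by simp
  also have "\<dots> = card (e i) + card (\<Union>(e ` set l))"
    using Cons.prems assms fin by (intro card_Un_disjoint) auto
  finally show ?case using Cons by simp
qed

lemma power_sum_list: "(p::real) ^ sum_list (map f l) = prod_list (map (\<lambda>i. p ^ f i) l)"
  by (induction l) (auto simp: power_add)

lemma sum_lists_prod:
  fixes w :: "'b \<Rightarrow> real"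
  assumes "finite I"
  shows "(\<Sum>l\<in>{l. set l \<subseteq> I \<and> length l = q}. prod_list (map w l)) = (\<Sum>i\<in>I. w i) ^ q"
proof (induction q)
  case 0
  have "{l. set l \<subseteq> I \<and> length l = 0} = {[]}" by auto
  then show ?case by simp
next
  case (Suc q)
  have eq: "{l. set l \<subseteq> I \<and> length l = Suc q} = (\<lambda>(i,l). i # l) ` (I \<times> {l. set l \<subseteq> I \<and> length l = q})"
  proof (intro set_eqI iffI)
    fix l assume "l \<in> {l. set l \<subseteq> I \<and> length l = Suc q}"
    then show "l \<in> (\<lambda>(i,l). i # l) ` (I \<times> {l. set l \<subseteq> I \<and> length l = q})"
      by (cases l) force+
  qed auto
  have inj: "inj_on (\<lambda>(i,l). i # l) (I \<times> {l. set l \<subseteq> I \<and> length l = q})"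
    by (rule inj_onI) auto
  have "(\<Sum>l\<in>{l. set l \<subseteq> I \<and> length l = Suc q}. prod_list (map w l))
      = (\<Sum>x\<in>I \<times> {l. set l \<subseteq> I \<and> length l = q}. prod_list (map w ((\<lambda>(i,l). i # l) x)))"
    unfolding eq by (subst sum.reindex[OF inj]) (simp add: comp_def)
  also have "\<dots> = (\<Sum>(i,l)\<in>I \<times> {l. set l \<subseteq> I \<and> length l = q}. w i * prod_list (map w l))"
    by (rule sum.cong) auto
  also have "\<dots> = (\<Sum>i\<in>I. \<Sum>l\<in>{l. set l \<subseteq> I \<and> length l = q}. w i * prod_list (map w l))"
    by (rule sum.cartesian_product[symmetric])
  also have "\<dots> = (\<Sum>i\<in>I. w i * (\<Sum>i\<in>I. w i) ^ q)"
    by (simp add: sum_distrib_left[symmetric] Suc)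
  also have "\<dots> = (\<Sum>i\<in>I. w i) ^ Suc q"
    by (simp add: sum_distrib_right[symmetric])
  finally show ?case .
qed

lemma real_card_filter:
  assumes "finite A"
  shows "real (card {x\<in>A. P x}) = (\<Sum>x\<in>A. if P x then 1 else 0)"
  using assms by (simp add: sum.If_cases Int_def)



lemma deletion:
  fixes V :: "'a set" and I :: "'b set" and e :: "'b \<Rightarrow> 'a set" and L :: real
  assumes fV: "finite V" and fI: "finite I" and eV: "\<forall>i\<in>I. e i \<subseteq> V"
    and eh: "\<forall>i\<in>I. card (e i) \<le> h" and mV: "m \<le> card V" and L0: "L \<ge> 0"
  shows "real (card {S. S \<subseteq> V \<and> card S = m \<and>
            (\<forall>X\<subseteq>S. card X \<le> h * q \<longrightarrow> real (card {i\<in>I. e i \<subseteq> S - X}) > L)}) * L ^ q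
         \<le> real (card V choose m) * (\<Sum>i\<in>I. (real m / real (card V)) ^ card (e i)) ^ q"
proof -
  define Bad where "Bad = {S. S \<subseteq> V \<and> card S = m \<and>
            (\<forall>X\<subseteq>S. card X \<le> h * q \<longrightarrow> real (card {i\<in>I. e i \<subseteq> S - X}) > L)}"
  define Sm where "Sm = {S. S \<subseteq> V \<and> card S = m}"
  define p where "p = real m / real (card V)"
  define Lq where "Lq = {l. length l = q \<and> dchain I e l}"
  define Z where "Z = (\<lambda>S j. {l. length l = j \<and> dchain I e l \<and> \<Union>(e ` set l) \<subseteq> S})"
  have finL: "finite {l. set l \<subseteq> I \<and> length l = j}" for j using fI by (rule finite_lists_length_eq)
  have finZ: "finite (Z S j)" for S j
    by (rule finite_subset[OF _ finL[of j]]) (auto simp: Z_def dest: dchain_set)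
  have finLq: "finite Lq"
    by (rule finite_subset[OF _ finL[of q]]) (auto simp: Lq_def dest: dchain_set)
  have finSm: "finite Sm" using fV by (simp add: Sm_def)
  have fe: "\<forall>i\<in>I. finite (e i)" using eV fV finite_subset by blast
  have claim1: "j \<le> q \<Longrightarrow> L ^ j \<le> real (card (Z S j))" if SB: "S \<in> Bad" for S j
  proof (induction j)
    case 0
    have "Z S 0 = {[]}" by (auto simp: Z_def)
    then show ?case by simp
  next
    case (Suc j)
    define A where "A = (\<lambda>l. {i\<in>I. e i \<subseteq> S - \<Union>(e ` set l)})"
    have eq: "Z S (Suc j) = (\<lambda>(l,i). i # l) ` Sigma (Z S j) A"
    proof (intro set_eqI iffI)
      fix l assume "l \<in> Z S (Suc j)"
      then show "l \<in> (\<lambda>(l,i). i # l) ` Sigma (Z S j) A"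
      proof (cases l)
        case (Cons a t)
        with \<open>l \<in> Z S (Suc j)\<close> show ?thesis
          by (auto simp: Z_def A_def intro!: image_eqI[where x="(t, a)"])
      qed (simp add: Z_def)
    next
      fix x assume "x \<in> (\<lambda>(l,i). i # l) ` Sigma (Z S j) A"
      then obtain l i where x: "x = i # l" and l: "l \<in> Z S j" and i: "i \<in> A l" by auto
      from i have i1: "e i \<inter> \<Union>(e ` set l) = {}" and i2: "e i \<subseteq> S" and i3: "i \<in> I"
        unfolding A_def by blast+
      from l have "length l = j" "dchain I e l" "\<Union>(e ` set l) \<subseteq> S" unfolding Z_def by blast+
      with i1 i2 i3 show "x \<in> Z S (Suc j)" unfolding x Z_def by simp
    qed
    have inj: "inj_on (\<lambda>(l,i). i # l) (Sigma (Z S j) A)"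
      by (rule inj_onI) auto
    have finA: "finite (A l)" for l using fI by (simp add: A_def)
    have Abig: "L \<le> real (card (A l))" if "l \<in> Z S j" for l
    proof -
      define X where "X = S \<inter> \<Union>(e ` set l)"
      have "set l \<subseteq> I" using that dchain_set by (auto simp: Z_def)
      have "card X \<le> card (\<Union>(e ` set l))"
        unfolding X_def using fe \<open>set l \<subseteq> I\<close> by (intro card_mono) auto
      also have "\<dots> \<le> (\<Sum>i\<in>set l. card (e i))" by (rule card_UN_le) simp
      also have "\<dots> \<le> (\<Sum>i\<in>set l. h)" using eh \<open>set l \<subseteq> I\<close> by (intro sum_mono) auto
      also have "\<dots> = card (set l) * h" by simp
      also have "\<dots> \<le> length l * h" by (simp add: card_length)
      also have "\<dots> \<le> h * q" using that Suc.prems by (simp add: Z_def)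
      finally have "card X \<le> h * q" .
      moreover have "X \<subseteq> S" by (simp add: X_def)
      ultimately have "real (card {i\<in>I. e i \<subseteq> S - X}) > L" using SB by (auto simp: Bad_def)
      moreover have "S - X = S - \<Union>(e ` set l)" by (auto simp: X_def)
      ultimately show ?thesis by (simp add: A_def)
    qed
    have "real (card (Z S (Suc j))) = real (card (Sigma (Z S j) A))"
      unfolding eq by (simp add: card_image[OF inj])
    also have "\<dots> = (\<Sum>l\<in>Z S j. real (card (A l)))"
      using finZ finA by (simp add: card_SigmaI)
    also have "\<dots> \<ge> (\<Sum>l\<in>Z S j. L)" using Abig by (intro sum_mono) auto
    finally have "real (card (Z S (Suc j))) \<ge> real (card (Z S j)) * L" by simp
    moreover have "L ^ j * L \<le> real (card (Z S j)) * L"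
      using Suc L0 by (intro mult_right_mono) auto
    ultimately show ?case by (simp add: algebra_simps)
  qed
  have ZS: "Z S q = {l\<in>Lq. \<Union>(e ` set l) \<subseteq> S}" for S by (auto simp: Z_def Lq_def)
  have "(\<Sum>S\<in>Sm. real (card (Z S q))) = (\<Sum>S\<in>Sm. \<Sum>l\<in>Lq. if \<Union>(e ` set l) \<subseteq> S then 1 else 0)"
    unfolding ZS using finLq by (simp add: real_card_filter)
  also have "\<dots> = (\<Sum>l\<in>Lq. \<Sum>S\<in>Sm. if \<Union>(e ` set l) \<subseteq> S then 1 else 0)"
    by (rule sum.swap)
  also have "\<dots> = (\<Sum>l\<in>Lq. real (card {S. S \<subseteq> V \<and> card S = m \<and> \<Union>(e ` set l) \<subseteq> S}))"
  proof (rule sum.cong[OF refl])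
    fix l
    have "{S. S \<subseteq> V \<and> card S = m \<and> \<Union>(e ` set l) \<subseteq> S} = {S\<in>Sm. \<Union>(e ` set l) \<subseteq> S}"
      by (auto simp: Sm_def)
    then show "(\<Sum>S\<in>Sm. if \<Union>(e ` set l) \<subseteq> S then 1 else 0) = real (card {S. S \<subseteq> V \<and> card S = m \<and> \<Union>(e ` set l) \<subseteq> S})"
      using finSm by (simp add: real_card_filter)
  qed
  also have "\<dots> \<le> (\<Sum>l\<in>Lq. real (card V choose m) * p ^ card (\<Union>(e ` set l)))"
  proof (rule sum_mono)
    fix l assume "l \<in> Lq"
    then have "set l \<subseteq> I" by (auto simp: Lq_def dest: dchain_set)
    then have "\<Union>(e ` set l) \<subseteq> V" using eV by auto
    then show "real (card {S. S \<subseteq> V \<and> card S = m \<and> \<Union>(e ` set l) \<subseteq> S}) \<le> real (card V choose m) * p ^ card (\<Union>(e ` set l))"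
      unfolding p_def by (rule count_supersets[OF fV _ mV])
  qed
  also have "\<dots> = real (card V choose m) * (\<Sum>l\<in>Lq. prod_list (map (\<lambda>i. p ^ card (e i)) l))"
  proof -
    have "p ^ card (\<Union>(e ` set l)) = prod_list (map (\<lambda>i. p ^ card (e i)) l)" if "l \<in> Lq" for l
      using that dchain_card[OF fe] power_sum_list by (simp add: Lq_def)
    then show ?thesis by (simp add: sum_distrib_left)
  qed
  also have "\<dots> \<le> real (card V choose m) * (\<Sum>l\<in>{l. set l \<subseteq> I \<and> length l = q}. prod_list (map (\<lambda>i. p ^ card (e i)) l))"
  proof (intro mult_left_mono sum_mono2[OF finL])
    show "Lq \<subseteq> {l. set l \<subseteq> I \<and> length l = q}" by (auto simp: Lq_def dest: dchain_set)
    show "0 \<le> prod_list (map (\<lambda>i. p ^ card (e i)) l)" for l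
      by (induction l) (auto simp: p_def)
  qed simp
  also have "\<dots> = real (card V choose m) * (\<Sum>i\<in>I. p ^ card (e i)) ^ q"
    by (simp add: sum_lists_prod[OF fI])
  finally have claim2: "(\<Sum>S\<in>Sm. real (card (Z S q))) \<le> real (card V choose m) * (\<Sum>i\<in>I. p ^ card (e i)) ^ q" .
  have BSm: "Bad \<subseteq> Sm" by (auto simp: Bad_def Sm_def)
  have "real (card Bad) * L ^ q = (\<Sum>S\<in>Bad. L ^ q)" by simp
  also have "\<dots> \<le> (\<Sum>S\<in>Bad. real (card (Z S q)))"
    by (intro sum_mono claim1) auto
  also have "\<dots> \<le> (\<Sum>S\<in>Sm. real (card (Z S q)))"
    by (intro sum_mono2[OF finSm BSm]) auto
  finally show ?thesis using claim2 by (simp add: Bad_def p_def)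
qed



lemma card_Sigma_le:
  assumes "finite A" "\<forall>a\<in>A. finite (B a) \<and> card (B a) \<le> b"
  shows "card (Sigma A B) \<le> card A * b"
proof -
  have "card (Sigma A B) = (\<Sum>a\<in>A. card (B a))" using assms by (simp add: card_SigmaI)
  also have "\<dots> \<le> card A * b" using assms sum_bounded_above[of A "\<lambda>a. card (B a)" b] by auto
  finally show ?thesis .
qed

lemma AP_image: "is_AP k P \<Longrightarrow> \<exists>a d. d \<ge> 1 \<and> P = (\<lambda>i. a + int i * d) ` {..<k}"
  unfolding is_AP_def by (auto simp: image_def)

lemma AP_fin: assumes "is_AP k P" shows "finite P" "card P \<le> k"
proof -
  obtain a d where "P = (\<lambda>i. a + int i * d) ` {..<k}" using AP_image[OF assms] by blast
  then show "finite P" "card P \<le> k" using card_image_le[of "{..<k}" "\<lambda>i. a + int i * d"] by auto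
qed

definition APx :: "nat \<Rightarrow> nat \<Rightarrow> int \<Rightarrow> int set set" where
  "APx k n x = {P. is_AP k P \<and> P \<subseteq> intv n \<and> x \<in> P}"

definition APxy :: "nat \<Rightarrow> int \<Rightarrow> int \<Rightarrow> int set set" where
  "APxy k x y = {P. is_AP k P \<and> x \<in> P \<and> y \<in> P}"

lemma APx_sub:
  assumes "k \<ge> 2"
  shows "APx k n x \<subseteq> (\<lambda>(i0,d). (\<lambda>i. x - int i0 * d + int i * d) ` {..<k}) ` ({..<k} \<times> {1..int n})"
proof
  fix P assume "P \<in> APx k n x"
  then have ap: "is_AP k P" and sub: "P \<subseteq> intv n" and xP: "x \<in> P" by (auto simp: APx_def)
  obtain a d where d1: "d \<ge> 1" and P: "P = (\<lambda>i. a + int i * d) ` {..<k}" using AP_image[OF ap] by blast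
  obtain i0 where i0: "i0 < k" "x = a + int i0 * d" using xP P by auto
  have "a \<in> P" using P assms by (auto intro: image_eqI[where x=0])
  moreover have "a + d \<in> P" using P assms by (auto intro: image_eqI[where x=1])
  ultimately have "a \<ge> 1" "a + d \<le> int n" using sub by (auto simp: intv_def)
  then have "d \<le> int n" by simp
  moreover have "P = (\<lambda>i. x - int i0 * d + int i * d) ` {..<k}" using P i0 by simp
  ultimately show "P \<in> (\<lambda>(i0,d). (\<lambda>i. x - int i0 * d + int i * d) ` {..<k}) ` ({..<k} \<times> {1..int n})"
    using i0 d1 by (auto intro!: image_eqI[where x="(i0, d)"])
qed

lemma APx_card:
  assumes "k \<ge> 2"
  shows "finite (APx k n x)" "card (APx k n x) \<le> k * n"
proof -
  let ?f = "(\<lambda>(i0,d). (\<lambda>i. x - int i0 * d + int i * d) ` {..<k})"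
  have fin: "finite ({..<k} \<times> {1..int n})" by simp
  show "finite (APx k n x)" using finite_subset[OF APx_sub[OF assms] finite_imageI[OF fin]] .
  have "card (APx k n x) \<le> card (?f ` ({..<k} \<times> {1..int n}))"
    by (rule card_mono[OF finite_imageI[OF fin] APx_sub[OF assms]])
  also have "\<dots> \<le> card ({..<k} \<times> {1..int n})" by (rule card_image_le[OF fin])
  also have "\<dots> = k * n" by (simp add: card_cartesian_product)
  finally show "card (APx k n x) \<le> k * n" .
qed

lemma APxy_sub:
  assumes "x \<noteq> y"
  shows "APxy k x y \<subseteq> (\<lambda>(i0,j0). (\<lambda>i. x - int i0 * ((y - x) div (int j0 - int i0)) + int i * ((y - x) div (int j0 - int i0))) ` {..<k}) ` ({..<k} \<times> {..<k})"
proof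
  fix P assume "P \<in> APxy k x y"
  then have ap: "is_AP k P" and xP: "x \<in> P" and yP: "y \<in> P" by (auto simp: APxy_def)
  obtain a d where d1: "d \<ge> 1" and P: "P = (\<lambda>i. a + int i * d) ` {..<k}" using AP_image[OF ap] by blast
  obtain i0 where i0: "i0 < k" "x = a + int i0 * d" using xP P by auto
  obtain j0 where j0: "j0 < k" "y = a + int j0 * d" using yP P by auto
  have ne: "int j0 - int i0 \<noteq> 0" using assms i0 j0 by auto
  have "y - x = (int j0 - int i0) * d" using i0 j0 by (simp add: algebra_simps)
  then have dd: "(y - x) div (int j0 - int i0) = d" using ne by simp
  have "P = (\<lambda>i. x - int i0 * d + int i * d) ` {..<k}" using P i0 by simp
  then show "P \<in> (\<lambda>(i0,j0). (\<lambda>i. x - int i0 * ((y - x) div (int j0 - int i0)) + int i * ((y - x) div (int j0 - int i0))) ` {..<k}) ` ({..<k} \<times> {..<k})"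
    using i0 j0 dd by (auto intro!: image_eqI[where x="(i0, j0)"])
qed

lemma APxy_card:
  assumes "x \<noteq> y"
  shows "finite (APxy k x y)" "card (APxy k x y) \<le> k * k"
proof -
  let ?f = "(\<lambda>(i0,j0). (\<lambda>i. x - int i0 * ((y - x) div (int j0 - int i0)) + int i * ((y - x) div (int j0 - int i0))) ` {..<k})"
  have fin: "finite ({..<k} \<times> {..<k})" by simp
  show "finite (APxy k x y)" using finite_subset[OF APxy_sub[OF assms] finite_imageI[OF fin]] .
  have "card (APxy k x y) \<le> card (?f ` ({..<k} \<times> {..<k}))"
    by (rule card_mono[OF finite_imageI[OF fin] APxy_sub[OF assms]])
  also have "\<dots> \<le> card ({..<k} \<times> {..<k})" by (rule card_image_le[OF fin])
  also have "\<dots> = k * k" by (simp add: card_cartesian_product)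
  finally show "card (APxy k x y) \<le> k * k" .
qed



definition Fx :: "nat \<Rightarrow> nat \<Rightarrow> nat \<Rightarrow> int \<Rightarrow> (int set \<times> int set) set" where
  "Fx k k' n x = Sigma (APx k n x) (\<lambda>P. {A. A \<subseteq> P - {x} \<and> card A = k'})"

definition Ix :: "nat \<Rightarrow> nat \<Rightarrow> nat \<Rightarrow> (int \<times> (int set \<times> int set) \<times> (int set \<times> int set)) set" where
  "Ix k k' n = Sigma (intv n) (\<lambda>x. Fx k k' n x \<times> Fx k k' n x)"

definition eH :: "int \<times> (int set \<times> int set) \<times> (int set \<times> int set) \<Rightarrow> int set" where
  "eH i = (case i of (x, (P1, A1), (P2, A2)) \<Rightarrow> A1 \<union> A2)"

lemma Fx_card:
  assumes "k \<ge> 2"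
  shows "finite (Fx k k' n x)" "card (Fx k k' n x) \<le> k * n * 2 ^ k"
proof -
  have fin: "finite (APx k n x)" and c: "card (APx k n x) \<le> k * n" using APx_card[OF assms] by auto
  have B: "\<forall>P\<in>APx k n x. finite {A. A \<subseteq> P - {x} \<and> card A = k'} \<and> card {A. A \<subseteq> P - {x} \<and> card A = k'} \<le> 2 ^ k"
  proof
    fix P assume "P \<in> APx k n x"
    then have fP: "finite P" and cP: "card P \<le> k" using AP_fin by (auto simp: APx_def)
    have sub: "{A. A \<subseteq> P - {x} \<and> card A = k'} \<subseteq> Pow P" by auto
    have "card {A. A \<subseteq> P - {x} \<and> card A = k'} \<le> card (Pow P)" using fP by (intro card_mono[OF _ sub]) auto
    also have "\<dots> = 2 ^ card P" using fP by (simp add: card_Pow)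
    also have "\<dots> \<le> 2 ^ k" using cP by (simp add: power_increasing)
    finally show "finite {A. A \<subseteq> P - {x} \<and> card A = k'} \<and> card {A. A \<subseteq> P - {x} \<and> card A = k'} \<le> 2 ^ k"
      using fP finite_subset[OF sub] by auto
  qed
  show "finite (Fx k k' n x)" unfolding Fx_def using fin B by auto
  have "card (Fx k k' n x) \<le> card (APx k n x) * 2 ^ k" unfolding Fx_def by (rule card_Sigma_le[OF fin B])
  also have "\<dots> \<le> k * n * 2 ^ k" using c by simp
  finally show "card (Fx k k' n x) \<le> k * n * 2 ^ k" .
qed

lemma Ix_card:
  assumes "k \<ge> 2"
  shows "finite (Ix k k' n)" "card (Ix k k' n) \<le> n * (k * n * 2 ^ k) ^ 2"
proof -
  have B: "\<forall>x\<in>intv n. finite (Fx k k' n x \<times> Fx k k' n x) \<and> card (Fx k k' n x \<times> Fx k k' n x) \<le> (k * n * 2 ^ k) ^ 2"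
    using Fx_card[OF assms] by (auto simp: card_cartesian_product power2_eq_square mult_le_mono)
  show "finite (Ix k k' n)" unfolding Ix_def using B by (auto simp: intv_def)
  have "card (Ix k k' n) \<le> card (intv n) * (k * n * 2 ^ k) ^ 2"
    unfolding Ix_def by (rule card_Sigma_le) (use B in \<open>auto simp: intv_def\<close>)
  then show "card (Ix k k' n) \<le> n * (k * n * 2 ^ k) ^ 2" by (simp add: intv_def)
qed

lemma Ix_mem:
  assumes "(x, (P1, A1), (P2, A2)) \<in> Ix k k' n"
  shows "x \<in> intv n" "P1 \<in> APx k n x" "P2 \<in> APx k n x" "A1 \<subseteq> P1 - {x}" "A2 \<subseteq> P2 - {x}"
    "card A1 = k'" "card A2 = k'"
  using assms by (auto simp: Ix_def Fx_def)

lemma eH_props: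
  assumes "i \<in> Ix k k' n"
  shows "eH i \<subseteq> intv n" "card (eH i) \<le> 2 * k'"
proof -
  obtain x P1 A1 P2 A2 where i: "i = (x, (P1, A1), (P2, A2))" by (cases i) auto
  note m = Ix_mem[OF assms[unfolded i]]
  show "eH i \<subseteq> intv n" using m by (auto simp: i eH_def APx_def)
  have "card (eH i) \<le> card A1 + card A2" unfolding i eH_def by (simp add: card_Un_le)
  then show "card (eH i) \<le> 2 * k'" using m by simp
qed



lemma cnt_bound:
  assumes "k \<ge> 2"
  shows "(\<Sum>x\<in>intv n. (real (AP_count k' k x S' (intv n)))\<^sup>2) \<le> real (card {i\<in>Ix k k' n. eH i \<subseteq> S'})"
proof -
  define G where "G x = {P. is_AP k P \<and> P \<subseteq> intv n \<and> x \<in> P \<and> k' \<le> card (P \<inter> (S' - {x}))}" for x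
  have AC: "AP_count k' k x S' (intv n) = card (G x)" for x by (simp add: AP_count_def G_def)
  have GA: "G x \<subseteq> APx k n x" for x by (auto simp: G_def APx_def)
  have finG: "finite (G x)" for x using finite_subset[OF GA APx_card(1)[OF assms]] .
  define sel where "sel x P = (SOME A. A \<subseteq> P \<inter> (S' - {x}) \<and> card A = k')" for x P
  have selp: "sel x P \<subseteq> P \<inter> (S' - {x}) \<and> card (sel x P) = k'" if "P \<in> G x" for x P
  proof -
    have "k' \<le> card (P \<inter> (S' - {x}))" using that by (simp add: G_def)
    then obtain T where "T \<subseteq> P \<inter> (S' - {x})" "card T = k'" by (rule obtain_subset_with_card_n)
    then have "\<exists>A. A \<subseteq> P \<inter> (S' - {x}) \<and> card A = k'" by blast
    then show ?thesis unfolding sel_def by (rule someI_ex)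
  qed
  define f where "f = (\<lambda>(x::int, (P1::int set, P2::int set)). (x, (P1, sel x P1), (P2, sel x P2)))"
  define D where "D = Sigma (intv n) (\<lambda>x. G x \<times> G x)"
  have inj: "inj_on f D" by (rule inj_onI) (auto simp: f_def)
  have img: "f ` D \<subseteq> {i\<in>Ix k k' n. eH i \<subseteq> S'}"
  proof
    fix z assume "z \<in> f ` D"
    then obtain x P1 P2 where z: "z = f (x, (P1, P2))" and x: "x \<in> intv n" and P1: "P1 \<in> G x" and P2: "P2 \<in> G x"
      by (auto simp: D_def)
    have s1: "sel x P1 \<subseteq> P1 \<inter> (S' - {x})" "card (sel x P1) = k'" using selp[OF P1] by auto
    have s2: "sel x P2 \<subseteq> P2 \<inter> (S' - {x})" "card (sel x P2) = k'" using selp[OF P2] by auto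
    have "P1 \<in> APx k n x" "P2 \<in> APx k n x" using P1 P2 GA by auto
    then show "z \<in> {i\<in>Ix k k' n. eH i \<subseteq> S'}"
      using x s1 s2 by (auto simp: z f_def Ix_def Fx_def eH_def)
  qed
  have finT: "finite {i\<in>Ix k k' n. eH i \<subseteq> S'}" using Ix_card(1)[OF assms] by simp
  have "(\<Sum>x\<in>intv n. (real (AP_count k' k x S' (intv n)))\<^sup>2) = (\<Sum>x\<in>intv n. real (card (G x \<times> G x)))"
    by (simp add: AC card_cartesian_product power2_eq_square)
  also have "\<dots> = real (card D)"
    unfolding D_def using finG by (subst card_SigmaI) (auto simp: intv_def)
  also have "\<dots> \<le> real (card {i\<in>Ix k k' n. eH i \<subseteq> S'})"
    using card_inj_on_le[OF inj img finT] by simp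
  finally show ?thesis .
qed

lemma mu_bound:
  assumes "k \<ge> 2" "0 \<le> p" "p \<le> (1::real)"
  shows "(\<Sum>i\<in>Ix k k' n. p ^ card (eH i))
     \<le> real (n * (k * n * 2 ^ k) ^ 2) * p ^ (2 * k') + real (n * (k * n * 2 ^ k) * (k' * (k * k) * 2 ^ k)) * p ^ k'"
proof -
  define I1 where "I1 = {i \<in> Ix k k' n. case i of (x, (P1, A1), (P2, A2)) \<Rightarrow> A1 \<inter> A2 \<noteq> {}}"
  have finI: "finite (Ix k k' n)" using Ix_card(1)[OF assms(1)] .
  have tm: "p ^ card (eH i) \<le> p ^ (2 * k') + (if i \<in> I1 then p ^ k' else 0)" if iI: "i \<in> Ix k k' n" for i
  proof -
    obtain x P1 A1 P2 A2 where i: "i = (x, (P1, A1), (P2, A2))" by (cases i) auto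
    note m = Ix_mem[OF iI[unfolded i]]
    have fP: "finite P1" "finite P2" using m AP_fin by (auto simp: APx_def)
    have fA: "finite A1" "finite A2" using m fP finite_subset by blast+
    show ?thesis
    proof (cases "A1 \<inter> A2 = {}")
      case True
      then have "card (eH i) = 2 * k'" using fA m by (simp add: i eH_def card_Un_disjoint)
      then show ?thesis using assms by simp
    next
      case False
      then have "i \<in> I1" using iI by (simp add: I1_def i)
      have "k' \<le> card (eH i)" using m fA by (simp add: i eH_def) (metis card_mono finite_UnI sup_ge1)
      then have "p ^ card (eH i) \<le> p ^ k'" using assms by (intro power_decreasing) auto
      moreover have "0 \<le> p ^ (2 * k')" using assms by simp
      ultimately have "p ^ card (eH i) \<le> p ^ (2 * k') + p ^ k'" by linarith
      then show ?thesis using \<open>i \<in> I1\<close> by simp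
    qed
  qed
  define U where "U x A1 = (\<Union>y\<in>A1. APxy k x y)" for x A1
  have I1sub: "I1 \<subseteq> Sigma (intv n) (\<lambda>x. Sigma (Fx k k' n x) (\<lambda>(P1, A1). Sigma (U x A1) Pow))"
  proof
    fix i assume iI1: "i \<in> I1"
    obtain x P1 A1 P2 A2 where i: "i = (x, (P1, A1), (P2, A2))" by (cases i) auto
    have iI: "i \<in> Ix k k' n" and ne: "A1 \<inter> A2 \<noteq> {}" using iI1 by (auto simp: I1_def i)
    note m = Ix_mem[OF iI[unfolded i]]
    obtain y where y: "y \<in> A1" "y \<in> A2" using ne by blast
    have "P2 \<in> APxy k x y" using m y by (auto simp: APxy_def APx_def)
    then have "P2 \<in> U x A1" using y by (auto simp: U_def)
    then show "i \<in> Sigma (intv n) (\<lambda>x. Sigma (Fx k k' n x) (\<lambda>(P1, A1). Sigma (U x A1) Pow))"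
      using iI m by (auto simp: i Ix_def)
  qed
  have Ubd: "finite (U x A1) \<and> card (U x A1) \<le> k' * (k * k)" if "(P1, A1) \<in> Fx k k' n x" for x P1 A1
  proof -
    have P1: "P1 \<in> APx k n x" "A1 \<subseteq> P1 - {x}" "card A1 = k'" using that by (auto simp: Fx_def)
    have "finite P1" using P1(1) AP_fin(1) by (auto simp: APx_def)
    then have fA: "finite A1" using P1(2) by (meson finite_Diff finite_subset)
    have xy: "x \<noteq> y" if "y \<in> A1" for y using P1 that by auto
    have "finite (U x A1)" unfolding U_def using fA APxy_card(1)[OF xy] by auto
    moreover have "card (U x A1) \<le> (\<Sum>y\<in>A1. card (APxy k x y))" unfolding U_def by (rule card_UN_le[OF fA])
    moreover have "(\<Sum>y\<in>A1. card (APxy k x y)) \<le> card A1 * (k * k)"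
      using APxy_card(2)[OF xy] sum_bounded_above[of A1 "\<lambda>y. card (APxy k x y)" "k * k"] by auto
    ultimately show ?thesis using P1 by simp
  qed
  have inner: "finite (Sigma (U x A1) Pow) \<and> card (Sigma (U x A1) Pow) \<le> k' * (k * k) * 2 ^ k"
    if "(P1, A1) \<in> Fx k k' n x" for x P1 A1
  proof -
    have U: "finite (U x A1)" "card (U x A1) \<le> k' * (k * k)" using Ubd[OF that] by auto
    have PB: "\<forall>P\<in>U x A1. finite (Pow P) \<and> card (Pow P) \<le> 2 ^ k"
    proof
      fix P assume "P \<in> U x A1"
      then have ap: "is_AP k P" by (auto simp: U_def APxy_def)
      show "finite (Pow P) \<and> card (Pow P) \<le> 2 ^ k"
        using AP_fin[OF ap] by (simp add: card_Pow power_increasing)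
    qed
    have "card (Sigma (U x A1) Pow) \<le> card (U x A1) * 2 ^ k" by (rule card_Sigma_le[OF U(1) PB])
    also have "\<dots> \<le> k' * (k * k) * 2 ^ k" using U by simp
    finally show ?thesis using U PB by auto
  qed
  have mid: "\<forall>x\<in>intv n. finite (Sigma (Fx k k' n x) (\<lambda>(P1, A1). Sigma (U x A1) Pow))
       \<and> card (Sigma (Fx k k' n x) (\<lambda>(P1, A1). Sigma (U x A1) Pow)) \<le> (k * n * 2 ^ k) * (k' * (k * k) * 2 ^ k)"
  proof
    fix x assume "x \<in> intv n"
    have F: "finite (Fx k k' n x)" "card (Fx k k' n x) \<le> k * n * 2 ^ k" using Fx_card[OF assms(1)] by auto
    have B: "\<forall>a\<in>Fx k k' n x. finite ((\<lambda>(P1, A1). Sigma (U x A1) Pow) a) \<and> card ((\<lambda>(P1, A1). Sigma (U x A1) Pow) a) \<le> k' * (k * k) * 2 ^ k"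
      using inner by auto
    have "card (Sigma (Fx k k' n x) (\<lambda>(P1, A1). Sigma (U x A1) Pow)) \<le> card (Fx k k' n x) * (k' * (k * k) * 2 ^ k)"
      by (rule card_Sigma_le[OF F(1) B])
    also have "\<dots> \<le> (k * n * 2 ^ k) * (k' * (k * k) * 2 ^ k)" using F by simp
    finally show "finite (Sigma (Fx k k' n x) (\<lambda>(P1, A1). Sigma (U x A1) Pow))
       \<and> card (Sigma (Fx k k' n x) (\<lambda>(P1, A1). Sigma (U x A1) Pow)) \<le> (k * n * 2 ^ k) * (k' * (k * k) * 2 ^ k)"
      using F B by auto
  qed
  have "card (Sigma (intv n) (\<lambda>x. Sigma (Fx k k' n x) (\<lambda>(P1, A1). Sigma (U x A1) Pow)))
      \<le> card (intv n) * ((k * n * 2 ^ k) * (k' * (k * k) * 2 ^ k))"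
    by (rule card_Sigma_le[OF _ mid]) (simp add: intv_def)
  moreover have "finite (Sigma (intv n) (\<lambda>x. Sigma (Fx k k' n x) (\<lambda>(P1, A1). Sigma (U x A1) Pow)))"
    using mid by (auto simp: intv_def)
  ultimately have cI1: "card I1 \<le> n * (k * n * 2 ^ k) * (k' * (k * k) * 2 ^ k)"
    using card_mono[OF _ I1sub] by (simp add: intv_def)
  have I1I: "I1 \<subseteq> Ix k k' n" by (auto simp: I1_def)
  have "(\<Sum>i\<in>Ix k k' n. p ^ card (eH i)) \<le> (\<Sum>i\<in>Ix k k' n. p ^ (2 * k') + (if i \<in> I1 then p ^ k' else 0))"
    using tm by (intro sum_mono) auto
  also have "\<dots> = real (card (Ix k k' n)) * p ^ (2 * k') + real (card I1) * p ^ k'"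
    using finI I1I by (simp add: sum.distrib sum.If_cases Int_absorb1 Int_absorb2)
  also have "\<dots> \<le> real (n * (k * n * 2 ^ k) ^ 2) * p ^ (2 * k') + real (n * (k * n * 2 ^ k) * (k' * (k * k) * 2 ^ k)) * p ^ k'"
  proof (intro add_mono mult_right_mono)
    show "real (card (Ix k k' n)) \<le> real (n * (k * n * 2 ^ k) ^ 2)" using Ix_card(2)[OF assms(1), of k' n] by (simp only: of_nat_le_iff)
    show "real (card I1) \<le> real (n * (k * n * 2 ^ k) * (k' * (k * k) * 2 ^ k))" using cI1 by (simp only: of_nat_le_iff)
  qed (use assms in auto)
  finally show ?thesis .
qed



lemma powr_facts:
  fixes n m k k' :: nat and C :: real
  assumes k2: "k \<ge> 2" and kk: "k' < k" and n1: "n \<ge> 1" and C1: "C \<ge> 1"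
    and mC: "real m \<ge> C * real n powr (1 - 1 / (real k - 1))"
  shows "real m \<ge> C" "real n * (real m / real n) ^ k' \<ge> 1"
proof -
  define r where "r = 1 / (real k - 1)"
  have r0: "0 < r" "r \<le> 1" using k2 by (auto simp: r_def)
  have np: "real n > 0" using n1 by simp
  have pw1: "real n powr (1 - r) \<ge> 1" using n1 r0 by (intro ge_one_powr_ge_zero) auto
  have mC': "real m \<ge> C * real n powr (1 - r)" using mC by (simp add: r_def)
  have "C * 1 \<le> C * real n powr (1 - r)" using pw1 C1 by (intro mult_left_mono) auto
  then show "real m \<ge> C" using mC' by simp
  have "1 * real n powr (1 - r) \<le> C * real n powr (1 - r)" using pw1 C1 by (intro mult_right_mono) auto
  then have "real m \<ge> real n powr (1 - r)" using mC' by simp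
  then have p: "real m / real n \<ge> real n powr (- r)"
    using np by (simp add: powr_diff powr_minus_divide divide_simps)
  have "(real m / real n) ^ k' \<ge> (real n powr (- r)) ^ k'"
    using p by (intro power_mono) auto
  moreover have "(real n powr (- r)) ^ k' = real n powr (- (real k' * r))"
    using np by (simp add: powr_power)
  moreover have "real n powr (- (real k' * r)) \<ge> real n powr (-1)"
  proof (rule powr_mono)
    have "real k' \<le> real k - 1" using kk by simp
    then have "real k' * r \<le> 1" using k2 by (simp add: r_def divide_simps)
    then show "- 1 \<le> - (real k' * r)" by simp
  qed (use n1 in simp)
  moreover have "real n powr (-1) = 1 / real n" using np by (simp add: powr_minus_divide)
  ultimately have "(real m / real n) ^ k' \<ge> 1 / real n" by linarith
  then show "real n * (real m / real n) ^ k' \<ge> 1" using np by (simp add: divide_simps mult.commute)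
qed



theorem lemma4:
  fixes k' k :: nat and \<beta> \<xi> :: real
  assumes "1 \<le> k'" and "k' < k" and "\<beta> > 0" and "\<xi> > 0"
  shows "\<exists>C T :: real. C > 0 \<and> T > 0 \<and>
    (\<exists>N. \<forall>n \<ge> N. \<forall>m :: nat. real m \<ge> C * real n powr (1 - 1 / (real k - 1)) \<longrightarrow>
      real (card {S. S \<subseteq> intv n \<and> card S = m \<and>
        \<not> (\<exists>X \<subseteq> S. real (card X) \<le> \<xi> * real m \<and>
             (1 / real n) * (\<Sum>x\<in>intv n. (real (AP_count k' k x (S - X) (intv n)))\<^sup>2)
               \<le> T * (real n * (real m / real n) ^ k')\<^sup>2)})
      \<le> \<beta> ^ m * real (n choose m))"
proof -
  have k2: "k \<ge> 2" using assms by simp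
  define h where "h = 2 * k'"
  define a :: nat where "a = nat \<lceil>real h / \<xi>\<rceil> + 1"
  have a1: "a \<ge> 1" by (simp add: a_def)
  have ah: "real h \<le> \<xi> * real a"
  proof -
    have "real h / \<xi> \<le> real a" unfolding a_def by linarith
    then show ?thesis using assms(4) by (simp add: divide_simps mult.commute)
  qed
  define \<beta>' where "\<beta>' = min \<beta> 1"
  have b'0: "0 < \<beta>'" and b'1: "\<beta>' \<le> 1" and b'b: "\<beta>' \<le> \<beta>" using assms by (auto simp: \<beta>'_def)
  define c1 :: real where "c1 = real ((k * 2 ^ k) ^ 2)"
  define c2 :: real where "c2 = real (k * 2 ^ k * (k' * (k * k) * 2 ^ k))"
  define c where "c = c1 + c2"
  have "c1 > 0" using k2 by (simp add: c1_def)
  moreover have "c2 \<ge> 0" by (simp add: c2_def)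
  ultimately have c0: "c > 0" by (simp add: c_def)
  define T where "T = c / \<beta>' ^ (2 * a)"
  define C :: real where "C = max 1 (real (2 * a))"
  have T0: "T > 0" using c0 b'0 by (simp add: T_def)
  have C0: "C > 0" by (simp add: C_def)
  have main: "real (card {S. S \<subseteq> intv n \<and> card S = m \<and>
        \<not> (\<exists>X \<subseteq> S. real (card X) \<le> \<xi> * real m \<and>
             (1 / real n) * (\<Sum>x\<in>intv n. (real (AP_count k' k x (S - X) (intv n)))\<^sup>2)
               \<le> T * (real n * (real m / real n) ^ k')\<^sup>2)})
      \<le> \<beta> ^ m * real (n choose m)"
    if n1: "n \<ge> 1" and mC: "real m \<ge> C * real n powr (1 - 1 / (real k - 1))" for n m
  proof -
    define Bad where "Bad = {S. S \<subseteq> intv n \<and> card S = m \<and>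
        \<not> (\<exists>X \<subseteq> S. real (card X) \<le> \<xi> * real m \<and>
             (1 / real n) * (\<Sum>x\<in>intv n. (real (AP_count k' k x (S - X) (intv n)))\<^sup>2)
               \<le> T * (real n * (real m / real n) ^ k')\<^sup>2)}"
    have cardV: "card (intv n) = n" by (simp add: intv_def)
    have finV: "finite (intv n)" by (simp add: intv_def)
    have np: "real n > 0" using n1 by simp
    show ?thesis
    proof (cases "m \<le> n")
      case False
      have "Bad = {}"
      proof (rule ccontr)
        assume "Bad \<noteq> {}"
        then obtain S where "S \<subseteq> intv n" "card S = m" by (auto simp: Bad_def)
        then have "m \<le> n" using card_mono[OF finV] cardV by metis
        then show False using False by simp
      qed
      then have "real (card Bad) \<le> \<beta> ^ m * real (n choose m)" using assms by simp
      then show ?thesis by (simp only: Bad_def)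
    next
      case True
      have C1: "C \<ge> 1" by (simp add: C_def)
      note pf = powr_facts[OF k2 assms(2) n1 C1 mC]
      define p where "p = real m / real n"
      define \<mu> where "\<mu> = real n * p ^ k'"
      have \<mu>1: "\<mu> \<ge> 1" using pf(2) by (simp add: \<mu>_def p_def)
      have p0: "0 \<le> p" and p1: "p \<le> 1" using True np by (auto simp: p_def divide_simps)
      have m2a: "real m \<ge> real (2 * a)" using pf(1) by (simp add: C_def)
      define q where "q = m div a"
      have hq: "real (card X) \<le> \<xi> * real m" if "card X \<le> h * q" for X :: "int set"
      proof -
        have "q * a \<le> m" by (simp add: q_def)
        then have "real q * real a \<le> real m" by (metis of_nat_le_iff of_nat_mult)
        have "real (card X) \<le> real h * real q" using that by (metis of_nat_le_iff of_nat_mult)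
        also have "\<dots> \<le> \<xi> * real a * real q" using ah by (intro mult_right_mono) auto
        also have "\<dots> = \<xi> * (real q * real a)" by simp
        also have "\<dots> \<le> \<xi> * real m" using \<open>real q * real a \<le> real m\<close> assms(4) by (intro mult_left_mono) auto
        finally show ?thesis .
      qed
      define L where "L = T * (real n * \<mu>\<^sup>2)"
      have L0: "L > 0" using T0 np \<mu>1 by (simp add: L_def)
      define BadD where "BadD = {S. S \<subseteq> intv n \<and> card S = m \<and>
            (\<forall>X\<subseteq>S. card X \<le> h * q \<longrightarrow> real (card {i\<in>Ix k k' n. eH i \<subseteq> S - X}) > L)}"
      have sub: "Bad \<subseteq> BadD"
      proof
        fix S assume SB: "S \<in> Bad"
        have "real (card {i\<in>Ix k k' n. eH i \<subseteq> S - X}) > L" if "X \<subseteq> S" "card X \<le> h * q" for X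
        proof (rule ccontr)
          assume "\<not> ?thesis"
          then have le: "real (card {i\<in>Ix k k' n. eH i \<subseteq> S - X}) \<le> L" by simp
          have "(\<Sum>x\<in>intv n. (real (AP_count k' k x (S - X) (intv n)))\<^sup>2) \<le> L"
            using cnt_bound[OF k2, where n=n and k'=k' and S'="S - X"] le by linarith
          then have "(1 / real n) * (\<Sum>x\<in>intv n. (real (AP_count k' k x (S - X) (intv n)))\<^sup>2) \<le> (1 / real n) * L"
            using np by (intro mult_left_mono) auto
          also have "\<dots> = T * (real n * (real m / real n) ^ k')\<^sup>2"
            using np by (simp add: L_def \<mu>_def p_def)
          finally show False using SB that hq[OF that(2)] by (auto simp: Bad_def)
        qed
        then show "S \<in> BadD" using SB by (auto simp: BadD_def Bad_def)
      qed
      have finBD: "finite BadD" by (rule finite_subset[of _ "Pow (intv n)"]) (auto simp: BadD_def finV)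
      have eprops: "\<forall>i\<in>Ix k k' n. eH i \<subseteq> intv n" "\<forall>i\<in>Ix k k' n. card (eH i) \<le> h"
        using eH_props by (auto simp: h_def)
      have del: "real (card BadD) * L ^ q \<le> real (n choose m) * (\<Sum>i\<in>Ix k k' n. p ^ card (eH i)) ^ q"
        using deletion[OF finV Ix_card(1)[OF k2] eprops(1) eprops(2), of m L q] True L0
        by (simp add: cardV BadD_def p_def)
      define \<mu>H where "\<mu>H = (\<Sum>i\<in>Ix k k' n. p ^ card (eH i))"
      have \<mu>H0: "\<mu>H \<ge> 0" using p0 by (simp add: \<mu>H_def sum_nonneg)
      have "\<mu>H \<le> real (n * (k * n * 2 ^ k) ^ 2) * p ^ (2 * k') + real (n * (k * n * 2 ^ k) * (k' * (k * k) * 2 ^ k)) * p ^ k'"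
        unfolding \<mu>H_def by (rule mu_bound[OF k2 p0 p1])
      also have "\<dots> = c1 * (real n * \<mu>\<^sup>2) + c2 * (real n * \<mu>)"
        by (simp add: c1_def c2_def \<mu>_def power2_eq_square power_mult_distrib power_mult algebra_simps)
      also have "\<dots> \<le> c1 * (real n * \<mu>\<^sup>2) + c2 * (real n * \<mu>\<^sup>2)"
      proof -
        have "\<mu> \<le> \<mu>\<^sup>2" using \<mu>1 by (simp add: power2_eq_square)
        then have "real n * \<mu> \<le> real n * \<mu>\<^sup>2" using np by simp
        moreover have "c2 \<ge> 0" by (simp add: c2_def)
        ultimately have "c2 * (real n * \<mu>) \<le> c2 * (real n * \<mu>\<^sup>2)" by (rule mult_left_mono)
        then show ?thesis by linarith
      qed
      also have "\<dots> = L * \<beta>' ^ (2 * a)"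
      proof -
        have "\<beta>' ^ (2 * a) > 0" using b'0 by simp
        then have "T * \<beta>' ^ (2 * a) = c" unfolding T_def using b'0 by simp
        then have "L * \<beta>' ^ (2 * a) = c * (real n * \<mu>\<^sup>2)" unfolding L_def by (metis mult.assoc mult.commute)
        then show ?thesis by (simp add: c_def algebra_simps)
      qed
      finally have \<mu>HL: "\<mu>H \<le> L * \<beta>' ^ (2 * a)" .
      have "real (card BadD) * L ^ q \<le> real (n choose m) * (L * \<beta>' ^ (2 * a)) ^ q"
        using del \<mu>HL \<mu>H0 by (simp add: \<mu>H_def[symmetric]) (meson order_trans mult_left_mono power_mono of_nat_0_le_iff)
      also have "\<dots> = (real (n choose m) * \<beta>' ^ (2 * a * q)) * L ^ q"
        by (simp add: power_mult_distrib power_mult)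
      finally have "real (card BadD) \<le> real (n choose m) * \<beta>' ^ (2 * a * q)"
        using L0 by simp
      also have "\<dots> \<le> real (n choose m) * \<beta>' ^ m"
      proof (intro mult_left_mono power_decreasing)
        have "m = a * q + m mod a" by (simp add: q_def)
        moreover have "m mod a < a" using a1 by simp
        moreover have "2 * a \<le> m" using m2a by linarith
        ultimately show "m \<le> 2 * a * q" by linarith
      qed (use b'0 b'1 in auto)
      also have "\<dots> \<le> real (n choose m) * \<beta> ^ m"
        using b'0 b'b by (intro mult_left_mono power_mono) auto
      finally have "real (card BadD) \<le> \<beta> ^ m * real (n choose m)" by (simp add: mult.commute)
      moreover have "card Bad \<le> card BadD" by (rule card_mono[OF finBD sub])
      ultimately have "real (card Bad) \<le> \<beta> ^ m * real (n choose m)" by linarith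
      then show ?thesis by (simp only: Bad_def)
    qed
  qed
  show ?thesis
    by (rule exI[of _ C], rule exI[of _ T]) (use C0 T0 main in \<open>auto intro!: exI[of _ 1]\<close>)
qed


end
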